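(* For integers $N\ge 1$ and $n\ge 1$, $$B_{N,n}=n!\sum_{k=1}^{n}\binom{n+1}{k+1}\sum_{\substack{i_1+\cdots+i_k=n\\ i_1,\dots,i_k\ge 0}}\frac{(-N!)^k}{(N+i_1)!\cdots(N+i_k)!},$$ where the inner sum runs over all $k$-tuples of nonnegative integers $(i_1,\dots,i_k)$ with sum $n$.
   Context: For a positive integer $N$, the hypergeometric Bernoulli numbers $B_{N,n}$ ($n\ge 0$) are defined by $$\frac{x^N/N!}{e^x-\sum_{n=0}^{N-1}x^n/n!}=\sum_{n=0}^\infty B_{N,n}\frac{x^n}{n!}.$$ *)

theory Defs
  imports "HOL-Computational_Algebra.Formal_Power_Series"
begin

definition hyp_bernoulli_fps :: "nat \<Rightarrow> real fps" where
  "hyp_bernoulli_fps N =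
     (fps_const (1 / fact N) * fps_X ^ N) /
     (fps_exp 1 - (\<Sum>n<N. fps_const (1 / fact n) * fps_X ^ n))"

definition hyp_bernoulli :: "nat \<Rightarrow> nat \<Rightarrow> real" where
  "hyp_bernoulli N n = fact n * fps_nth (hyp_bernoulli_fps N) n"

end

theory Submission
  imports Defs
begin
unbundle fps_syntax

lemma geom_binom:
  fixes y :: "'a::comm_ring_1"
  shows "(\<Sum>k\<le>n. (1 - y)^k) = (\<Sum>j\<le>n. of_nat (Suc n choose Suc j) * (- y)^j)"
proof -
  have "(\<Sum>k\<le>n. (1 - y)^k) = (\<Sum>k\<le>n. \<Sum>j\<le>n. of_nat (k choose j) * (-y)^j)"
  proof (rule sum.cong[OF refl])
    fix k assume k: "k \<in> {..n}"
    have "(1 - y)^k = ((-y) + 1)^k" by simp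
    also have "\<dots> = (\<Sum>j\<le>k. of_nat (k choose j) * (-y)^j)"
      by (subst binomial_ring) simp
    also have "\<dots> = (\<Sum>j\<le>n. of_nat (k choose j) * (-y)^j)"
      using k by (intro sum.mono_neutral_left) (auto, metis binomial_eq_0 not_le of_nat_0 mult_zero_left)
    finally show "(1 - y)^k = (\<Sum>j\<le>n. of_nat (k choose j) * (-y)^j)" .
  qed
  also have "\<dots> = (\<Sum>j\<le>n. \<Sum>k\<le>n. of_nat (k choose j) * (-y)^j)"
    by (rule sum.swap)
  also have "\<dots> = (\<Sum>j\<le>n. of_nat (\<Sum>k\<le>n. k choose j) * (-y)^j)"
    by (simp add: sum_distrib_right)
  also have "\<dots> = (\<Sum>j\<le>n. of_nat (Suc n choose Suc j) * (- y)^j)"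
    by (simp add: sum_choose_upper)
  finally show ?thesis .
qed

lemma pow_nth_zero:
  fixes a :: "'a::comm_ring_1 fps"
  assumes "a $ 0 = 0" "i < k"
  shows "(a ^ k) $ i = 0"
  using assms(2)
proof (induction k arbitrary: i)
  case 0 then show ?case by simp
next
  case (Suc k)
  have "(a ^ Suc k) $ i = (\<Sum>j=0..i. a$j * (a^k)$(i - j))"
    by (simp add: fps_mult_nth)
  also have "\<dots> = 0"
  proof (rule sum.neutral, intro ballI)
    fix j assume "j \<in> {0..i}"
    then show "a$j * (a^k)$(i - j) = 0"
      using Suc assms(1) by (cases j) auto
  qed
  finally show ?case .
qed

lemma mult_nth_zero:
  fixes a b :: "'a::comm_ring_1 fps"
  assumes "\<And>i. i \<le> n \<Longrightarrow> b $ i = 0"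
  shows "(a * b) $ n = 0"
  by (simp add: fps_mult_nth assms)


lemma power_nth_fun:
  fixes a :: "'a::comm_ring_1 fps"
  assumes "k \<ge> 1"
  shows "(a ^ k) $ n = (\<Sum>i \<in> {i :: nat \<Rightarrow> nat. (\<forall>j. j \<notin> {1..k} \<longrightarrow> i j = 0) \<and> (\<Sum>j = 1..k. i j) = n}.
           (\<Prod>j = 1..k. a $ (i j)))"
proof -
  obtain m where m: "k = Suc m" using assms by (cases k) auto
  let ?T = "{i :: nat \<Rightarrow> nat. (\<forall>j. j \<notin> {1..k} \<longrightarrow> i j = 0) \<and> (\<Sum>j = 1..k. i j) = n}"
  let ?f = "\<lambda>v::nat list. (\<lambda>j. if j \<in> {1..k} then v!(j-1) else 0)"
  let ?g = "\<lambda>i::nat\<Rightarrow>nat. map (\<lambda>j. i (Suc j)) [0..<k]"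
  have sh: "\<And>h :: nat \<Rightarrow> 'b::comm_monoid_add. (\<Sum>j = 1..k. h j) = (\<Sum>j<k. h (Suc j))"
    unfolding m by (simp del: sum.cl_ivl_Suc add: sum.shift_bounds_cl_Suc_ivl[of _ 0, simplified] atLeast0AtMost lessThan_Suc_atMost)
  have shp: "\<And>h :: nat \<Rightarrow> 'b::comm_monoid_mult. (\<Prod>j = 1..k. h j) = (\<Prod>j = 0..m. h (Suc j))"
    unfolding m by (simp del: prod.cl_ivl_Suc add: prod.shift_bounds_cl_Suc_ivl[of _ 0, simplified])
  have "(a ^ k) $ n = (\<Sum>v\<in>natpermute n (m+1). \<Prod>j = 0..m. a $ (v!j))"
    unfolding m by (rule fps_power_nth_Suc)
  also have "\<dots> = (\<Sum>i\<in>?T. \<Prod>j = 1..k. a $ (i j))"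
  proof (rule sum.reindex_bij_witness[of _ ?g ?f])
    fix v assume v: "v \<in> natpermute n (m+1)"
    then have len: "length v = k" and s: "sum_list v = n" using m by (auto simp: natpermute_def)
    show "?g (?f v) = v" using len by (intro nth_equalityI) auto
    have "(\<Sum>j = 1..k. ?f v j) = (\<Sum>j = 1..k. v!(j-1))" by (rule sum.cong) auto
    also have "\<dots> = (\<Sum>j<k. v ! j)" by (subst sh) simp
    also have "\<dots> = n" using s len by (simp add: sum_list_sum_nth atLeast0LessThan)
    finally show "?f v \<in> ?T" by auto
    have "(\<Prod>j = 1..k. a $ (?f v j)) = (\<Prod>j = 1..k. a $ (v!(j-1)))" by (rule prod.cong) auto
    also have "\<dots> = (\<Prod>j = 0..m. a $ (v!j))" by (subst shp) simp
    finally show "(\<Prod>j = 1..k. a $ (?f v j)) = (\<Prod>j = 0..m. a $ (v!j))" .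
  next
    fix i assume i: "i \<in> ?T"
    show "?f (?g i) = i"
    proof
      fix j show "?f (?g i) j = i j"
        using i by (cases "j \<in> {1..k}") (auto simp: nth_map_upt)
    qed
    have "sum_list (?g i) = (\<Sum>j<k. i (Suc j))"
      by (simp add: sum_list_sum_nth atLeast0LessThan)
    also have "\<dots> = n" using i sh[of i] by simp
    finally show "?g i \<in> natpermute n (m+1)" using m by (simp add: natpermute_def)
  qed
  finally show ?thesis .
qed


theorem proposition3:
  fixes N n :: nat
  assumes "N \<ge> 1" and "n \<ge> 1"
  shows "hyp_bernoulli N n =
    fact n * (\<Sum>k = 1..n. real ((n + 1) choose (k + 1)) *
      (\<Sum>i \<in> {i :: nat \<Rightarrow> nat. (\<forall>j. j \<notin> {1..k} \<longrightarrow> i j = 0) \<and> (\<Sum>j = 1..k. i j) = n}.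
         (- fact N) ^ k / (\<Prod>j = 1..k. fact (N + i j))))"
proof -
  define G :: "real fps" where "G = Abs_fps (\<lambda>m. 1 / fact (N + m))"
  define H :: "real fps" where "H = fps_const (fact N) * G"
  define F where "F = hyp_bernoulli_fps N"
  have G0: "G $ 0 \<noteq> 0" by (simp add: G_def)
  have H0: "H $ 0 = 1" by (simp add: H_def G_def)
  have Hnth: "H $ m = fact N / fact (N + m)" for m by (simp add: H_def G_def)
  have D: "fps_exp 1 - (\<Sum>m<N. fps_const (1 / fact m) * fps_X ^ m) = fps_X ^ N * G"
  proof (rule fps_ext)
    fix m
    have "(\<Sum>j<N. fps_const (1 / fact j) * fps_X ^ j) $ m = (\<Sum>j<N. if m = j then 1 / fact j else 0 :: real)"
      unfolding fps_sum_nth by (rule sum.cong) (simp_all add: fps_X_power_mult_right_nth)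
    also have "\<dots> = (if m < N then 1 / fact m else 0)" by (simp add: sum.delta')
    finally show "(fps_exp 1 - (\<Sum>m<N. fps_const (1 / fact m) * fps_X ^ m)) $ m = (fps_X ^ N * G) $ m"
      by (simp add: fps_X_power_mult_nth G_def)
  qed
  have F: "F = fps_const (1 / fact N) * inverse G"
  proof -
    have "F = (fps_const (1 / fact N) * fps_X ^ N) / (G * fps_X ^ N)"
      unfolding F_def hyp_bernoulli_fps_def D by (simp add: mult.commute)
    also have "\<dots> = fps_const (1 / fact N) / G"
      by (rule fps_divide_cancel) simp
    also have "\<dots> = fps_const (1 / fact N) * inverse G"
      by (rule fps_divide_unit[OF G0])
    finally show ?thesis .
  qed
  have FH: "F * H = 1"
  proof -
    have "F * H = fps_const (1 / fact N) * fps_const (fact N) * (inverse G * G)"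
      unfolding F H_def by (simp add: ac_simps)
    also have "\<dots> = 1" using G0 by (simp add: inverse_mult_eq_1)
    finally show ?thesis .
  qed
  define y where "y = 1 - H"
  define S where "S = (\<Sum>k\<le>n. y ^ k)"
  have y0: "y $ 0 = 0" by (simp add: y_def H0)
  have HS: "H * S = 1 - y ^ Suc n"
    using sum_gp_basic[of y n] by (simp add: y_def S_def)
  have "F = F * (H * S + y ^ Suc n)" by (simp add: HS)
  also have "\<dots> = (F * H) * S + F * y ^ Suc n" by (simp add: algebra_simps)
  finally have FS: "F = S + F * y ^ Suc n" by (simp add: FH)
  have "(F * y ^ Suc n) $ n = 0"
    by (rule mult_nth_zero) (rule pow_nth_zero[OF y0], simp)
  then have "F $ n = S $ n" by (subst FS) simp
  also have "S = (\<Sum>j\<le>n. of_nat (Suc n choose Suc j) * (- H)^j)"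
    unfolding S_def y_def by (rule geom_binom)
  also have "(\<Sum>j\<le>n. of_nat (Suc n choose Suc j) * (- H)^j) $ n
      = (\<Sum>j\<le>n. real (Suc n choose Suc j) * ((-1)^j * (H^j) $ n))"
    unfolding fps_sum_nth
  proof (rule sum.cong[OF refl])
    fix j
    have "(- H)^j = fps_const ((-1)^j) * H^j"
      by (simp add: power_minus[of H] fps_const_power[symmetric] fps_const_neg[symmetric])
    then show "(of_nat (Suc n choose Suc j) * (- H)^j) $ n = real (Suc n choose Suc j) * ((-1)^j * (H^j) $ n)"
      by (simp add: fps_of_nat[symmetric] mult.assoc del: fps_const_mult)
  qed
  also have "\<dots> = (\<Sum>j = 1..n. real (Suc n choose Suc j) * ((-1)^j * (H^j) $ n))"
    using assms(2)
    by (simp add: atMost_atLeast0 sum.atLeast_Suc_atMost)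
  also have "\<dots> = (\<Sum>k = 1..n. real ((n + 1) choose (k + 1)) *
      (\<Sum>i \<in> {i :: nat \<Rightarrow> nat. (\<forall>j. j \<notin> {1..k} \<longrightarrow> i j = 0) \<and> (\<Sum>j = 1..k. i j) = n}.
         (- fact N) ^ k / (\<Prod>j = 1..k. fact (N + i j))))"
  proof (rule sum.cong[OF refl])
    fix k assume k: "k \<in> {1..n}"
    have "(-1)^k * (H^k) $ n = (-1)^k * (\<Sum>i \<in> {i :: nat \<Rightarrow> nat. (\<forall>j. j \<notin> {1..k} \<longrightarrow> i j = 0) \<and> (\<Sum>j = 1..k. i j) = n}.
           (\<Prod>j = 1..k. H $ (i j)))"
      using k by (simp add: power_nth_fun)
    also have "\<dots> = (\<Sum>i \<in> {i :: nat \<Rightarrow> nat. (\<forall>j. j \<notin> {1..k} \<longrightarrow> i j = 0) \<and> (\<Sum>j = 1..k. i j) = n}.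
         (- fact N) ^ k / (\<Prod>j = 1..k. fact (N + i j)))"
      unfolding sum_distrib_left
    proof (rule sum.cong[OF refl])
      fix i
      have "(\<Prod>j = 1..k. H $ (i j)) = (\<Prod>j = 1..k. fact N / fact (N + i j))"
        by (simp add: Hnth)
      also have "\<dots> = fact N ^ k / (\<Prod>j = 1..k. fact (N + i j))"
        by (simp add: prod_dividef)
      finally show "(-1)^k * (\<Prod>j = 1..k. H $ (i j)) = (- fact N) ^ k / (\<Prod>j = 1..k. fact (N + i j))"
        by (simp only: power_minus[of "fact N"] times_divide_eq_right)
    qed
    finally show "real (Suc n choose Suc k) * ((-1)^k * (H^k) $ n) = real ((n + 1) choose (k + 1)) *
      (\<Sum>i \<in> {i :: nat \<Rightarrow> nat. (\<forall>j. j \<notin> {1..k} \<longrightarrow> i j = 0) \<and> (\<Sum>j = 1..k. i j) = n}.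
         (- fact N) ^ k / (\<Prod>j = 1..k. fact (N + i j)))" by simp
  qed
  finally show ?thesis unfolding hyp_bernoulli_def F_def by simp
qed

end
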